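(* Let $\alpha>0$ and consider the equilibria of $$\frac{d}{dt}v_n=-n^2v_n+\alpha v_n-2v_n\|v\|_H^2+v_n|v_n|^2,\quad n\in\mathbb Z.$$ Then every equilibrium having two or more nonzero components ($v_m\ne0$ and $v_k\ne0$ for some $m\ne k$) is unstable. The only stable equilibria are the one-component ones: $v_n=0$ for $n\ne k$, $v_k\ne0$, with $k^2<\frac{\alpha}{2}$.
   Context: $e_n=e^{inx}$, $H=L^2_{per}(-\pi,\pi)$ complex-valued, $v=\sum v_ne_n$, $\|v\|_H^2=\sum|v_n|^2$. The system is invariant under $v_n\mapsto e^{i\phi_n}v_n$, so each equilibrium may be rotated to a real one; (in)stability is understood for the real-valued system, via its linearization at a real equilibrium $v$ on real perturbations, $\frac d{dt}\theta_n=-n^2\theta_n+\alpha\theta_n-2\theta_n\|v\|_H^2-4v_n(v,\theta)+3\theta_nv_n^2$: unstable if this operator has a positive part of the spectrum, stable if all its eigenvalues are negative. *)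

theory Defs
  imports "HOL-Analysis.Analysis"
begin

text \<open>Sequences indexed by the Fourier modes n \<in> Z; v n is the coefficient of e_n.
  The space H = L^2_per corresponds to square-summable coefficient sequences.\<close>

definition l2seq :: "(int \<Rightarrow> 'a::real_normed_vector) \<Rightarrow> bool" where
  "l2seq v \<longleftrightarrow> (\<lambda>n. (norm (v n))^2) summable_on UNIV"

definition hnorm2 :: "(int \<Rightarrow> 'a::real_normed_vector) \<Rightarrow> real" where
  "hnorm2 v = (\<Sum>\<^sub>\<infinity>n. (norm (v n))^2)"

definition hinner :: "(int \<Rightarrow> real) \<Rightarrow> (int \<Rightarrow> real) \<Rightarrow> real" where
  "hinner v \<theta> = (\<Sum>\<^sub>\<infinity>n. v n * \<theta> n)"

definition equilibrium :: "real \<Rightarrow> (int \<Rightarrow> complex) \<Rightarrow> bool" where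
  "equilibrium \<alpha> v \<longleftrightarrow> l2seq v \<and>
     (\<forall>n. - ((of_int n)^2) * v n + complex_of_real \<alpha> * v n
           - 2 * v n * complex_of_real (hnorm2 v) + v n * complex_of_real ((cmod (v n))^2) = 0)"

definition real_rotation :: "(int \<Rightarrow> complex) \<Rightarrow> (int \<Rightarrow> real) \<Rightarrow> bool" where
  "real_rotation v w \<longleftrightarrow> (\<exists>\<phi> :: int \<Rightarrow> real. \<forall>n. complex_of_real (w n) = exp (\<i> * of_real (\<phi> n)) * v n)"

text \<open>Linearization at a real equilibrium v, acting on real perturbations theta:
  (L theta)_n = -n^2 theta_n + alpha theta_n - 2 theta_n ||v||^2 - 4 v_n (v,theta) + 3 theta_n v_n^2.\<close>
definition linop :: "real \<Rightarrow> (int \<Rightarrow> real) \<Rightarrow> (int \<Rightarrow> real) \<Rightarrow> (int \<Rightarrow> real)" where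
  "linop \<alpha> v \<theta> = (\<lambda>n. - ((of_int n)^2) * \<theta> n + \<alpha> * \<theta> n - 2 * \<theta> n * hnorm2 v
                        - 4 * v n * hinner v \<theta> + 3 * \<theta> n * (v n)^2)"

definition lindom :: "(int \<Rightarrow> real) set" where
  "lindom = {\<theta>. l2seq \<theta> \<and> l2seq (\<lambda>n. (of_int n)^2 * \<theta> n)}"

definition lin_spectrum :: "real \<Rightarrow> (int \<Rightarrow> real) \<Rightarrow> real set" where
  "lin_spectrum \<alpha> v = {\<mu>. \<not> ((\<forall>f. l2seq f \<longrightarrow> (\<exists>\<theta>\<in>lindom. (\<lambda>n. linop \<alpha> v \<theta> n - \<mu> * \<theta> n) = f)) \<and>
        (\<exists>C. \<forall>\<theta>\<in>lindom. hnorm2 \<theta> \<le> C * hnorm2 (\<lambda>n. linop \<alpha> v \<theta> n - \<mu> * \<theta> n)))}"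

definition lin_eigenvalue :: "real \<Rightarrow> (int \<Rightarrow> real) \<Rightarrow> real \<Rightarrow> bool" where
  "lin_eigenvalue \<alpha> v \<mu> \<longleftrightarrow> (\<exists>\<theta>\<in>lindom. \<theta> \<noteq> (\<lambda>_. 0) \<and> linop \<alpha> v \<theta> = (\<lambda>n. \<mu> * \<theta> n))"

definition real_unstable :: "real \<Rightarrow> (int \<Rightarrow> real) \<Rightarrow> bool" where
  "real_unstable \<alpha> v \<longleftrightarrow> (\<exists>\<mu>\<in>lin_spectrum \<alpha> v. \<mu> > 0)"

definition real_stable :: "real \<Rightarrow> (int \<Rightarrow> real) \<Rightarrow> bool" where
  "real_stable \<alpha> v \<longleftrightarrow> (\<forall>\<mu>. lin_eigenvalue \<alpha> v \<mu> \<longrightarrow> \<mu> < 0)"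

text \<open>(In)stability of a (complex) equilibrium is understood via its real rotations.\<close>
definition unstable_eq :: "real \<Rightarrow> (int \<Rightarrow> complex) \<Rightarrow> bool" where
  "unstable_eq \<alpha> v \<longleftrightarrow> (\<forall>w. real_rotation v w \<longrightarrow> real_unstable \<alpha> w)"

definition stable_eq :: "real \<Rightarrow> (int \<Rightarrow> complex) \<Rightarrow> bool" where
  "stable_eq \<alpha> v \<longleftrightarrow> (\<forall>w. real_rotation v w \<longrightarrow> real_stable \<alpha> w)"

end

theory Submission
  imports Defs
begin

lemma inf_fin:
  fixes f :: "'a \<Rightarrow> real"
  assumes "finite F" "\<And>x. x \<notin> F \<Longrightarrow> f x = 0"
  shows "infsum f UNIV = sum f F"
proof -
  have "infsum f UNIV = infsum f F"
    by (rule infsum_cong_neutral) (use assms in auto)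
  thus ?thesis using assms by simp
qed

lemma summ_fin:
  fixes f :: "'a \<Rightarrow> real"
  assumes "finite F" "\<And>x. x \<notin> F \<Longrightarrow> f x = 0"
  shows "f summable_on UNIV"
proof -
  have "f summable_on F" using assms by simp
  thus ?thesis
    using summable_on_cong_neutral[of UNIV F f f] assms by auto
qed

lemma term_le:
  fixes f :: "'a \<Rightarrow> real"
  assumes "f summable_on UNIV" "\<And>x. f x \<ge> 0"
  shows "f n \<le> infsum f UNIV"
proof -
  have "infsum f {n} \<le> infsum f UNIV"
    by (rule infsum_mono_neutral) (use assms in auto)
  thus ?thesis by simp
qed

lemma rot_sq:
  assumes "real_rotation v w"
  shows "(w n)^2 = (cmod (v n))^2"
proof -
  obtain \<phi> where h: "\<And>n. complex_of_real (w n) = exp (\<i> * of_real (\<phi> n)) * v n"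
    using assms unfolding real_rotation_def by blast
  have "cmod (complex_of_real (w n)) = cmod (v n)"
    unfolding h by (simp add: norm_mult)
  hence "\<bar>w n\<bar> = cmod (v n)" by simp
  thus ?thesis by (metis power2_abs)
qed

lemma rot_nz:
  assumes "real_rotation v w"
  shows "(w n \<noteq> 0) = (v n \<noteq> 0)"
  using rot_sq[OF assms, of n] by auto

lemma rot_hnorm:
  assumes "real_rotation v w"
  shows "hnorm2 w = hnorm2 v"
  unfolding hnorm2_def using rot_sq[OF assms] by simp

lemma rot_exists: "real_rotation v (\<lambda>n. cmod (v n))"
  unfolding real_rotation_def
proof (intro exI allI)
  fix n
  show "complex_of_real (cmod (v n)) = exp (\<i> * of_real (- Arg (v n))) * v n"
  proof (cases "v n = 0")
    case True thus ?thesis by simp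
  next
    case False
    have "exp (\<i> * of_real (- Arg (v n))) * v n
        = exp (\<i> * of_real (- Arg (v n))) * (of_real (cmod (v n)) * exp (\<i> * Arg (v n)))"
      using Arg_eq[OF False] by simp
    also have "\<dots> = of_real (cmod (v n)) * (exp (\<i> * of_real (- Arg (v n))) * exp (\<i> * Arg (v n)))"
      by (simp add: algebra_simps)
    also have "exp (\<i> * of_real (- Arg (v n))) * exp (\<i> * Arg (v n)) = 1"
      by (simp add: exp_add[symmetric])
    finally show ?thesis by simp
  qed
qed

lemma eq_comp:
  assumes "equilibrium \<alpha> v" "v n \<noteq> 0"
  shows "(cmod (v n))^2 = (of_int n)^2 - \<alpha> + 2 * hnorm2 v"
proof -
  have "- ((of_int n)^2) * v n + complex_of_real \<alpha> * v n
           - 2 * v n * complex_of_real (hnorm2 v) + v n * complex_of_real ((cmod (v n))^2) = 0"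
    using assms unfolding equilibrium_def by blast
  hence "v n * complex_of_real (- ((of_int n)^2) + \<alpha> - 2 * hnorm2 v + (cmod (v n))^2) = 0"
    by (simp add: algebra_simps)
  hence "complex_of_real (- ((of_int n)^2) + \<alpha> - 2 * hnorm2 v + (cmod (v n))^2) = 0"
    using assms(2) by simp
  hence "- ((of_int n)^2) + \<alpha> - 2 * hnorm2 v + (cmod (v n))^2 = 0"
    by (simp only: of_real_eq_0_iff)
  thus ?thesis by simp
qed

lemma eq_fin:
  assumes "equilibrium \<alpha> v"
  shows "finite {n. v n \<noteq> 0}"
proof -
  have sm: "(\<lambda>n. (norm (v n))^2) summable_on UNIV"
    using assms unfolding equilibrium_def l2seq_def by blast
  have S0: "hnorm2 v \<ge> 0" unfolding hnorm2_def by (rule infsum_nonneg) simp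
  have "{n. v n \<noteq> 0} \<subseteq> {-\<lceil>\<alpha>\<rceil>..\<lceil>\<alpha>\<rceil>}"
  proof
    fix n assume "n \<in> {n. v n \<noteq> 0}"
    hence nz: "v n \<noteq> 0" by simp
    have "(cmod (v n))^2 \<le> hnorm2 v"
      unfolding hnorm2_def using term_le[OF sm] by simp
    hence "real_of_int (n^2) \<le> \<alpha>" using eq_comp[OF assms nz] S0 by simp
    moreover have "\<bar>n\<bar> \<le> n^2"
    proof (cases "n = 0")
      case False
      hence "1 \<le> \<bar>n\<bar>" by simp
      hence "\<bar>n\<bar>*1 \<le> \<bar>n\<bar>*\<bar>n\<bar>" by (intro mult_left_mono) simp_all
      thus ?thesis by (simp add: power2_eq_square abs_mult[symmetric])
    qed simp
    ultimately have "real_of_int \<bar>n\<bar> \<le> \<alpha>"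
      by (smt (verit) of_int_le_iff)
    hence "\<bar>n\<bar> \<le> \<lceil>\<alpha>\<rceil>" by linarith
    thus "n \<in> {-\<lceil>\<alpha>\<rceil>..\<lceil>\<alpha>\<rceil>}" by auto
  qed
  thus ?thesis by (rule finite_subset) simp
qed

lemma secular:
  fixes w :: "int \<Rightarrow> real" and N :: "int set"
  assumes fin: "finite N" and pq: "p \<in> N" "q \<in> N" "p \<noteq> q" and nz: "\<And>n. n \<in> N \<Longrightarrow> w n \<noteq> 0"
  shows "\<exists>\<mu>>0. \<exists>\<theta>. (\<forall>n. n \<notin> N \<longrightarrow> \<theta> n = 0) \<and> (\<exists>n\<in>N. \<theta> n \<noteq> 0) \<and>
           (\<forall>n\<in>N. 2*(w n)^2 * \<theta> n - 4 * w n * (\<Sum>j\<in>N. w j * \<theta> j) = \<mu> * \<theta> n)"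
proof (cases "\<exists>p q. p \<in> N \<and> q \<in> N \<and> p \<noteq> q \<and> (w p)^2 = (w q)^2")
  case True
  then obtain p q where p: "p \<in> N" "q \<in> N" "p \<noteq> q" "(w p)^2 = (w q)^2" by blast
  define \<theta> where "\<theta> = (\<lambda>n. if n = p then w q else if n = q then - w p else 0)"
  have s: "(\<Sum>j\<in>N. w j * \<theta> j) = (\<Sum>j\<in>{p,q}. w j * \<theta> j)"
    by (rule sum.mono_neutral_right) (use fin p in \<open>auto simp: \<theta>_def\<close>)
  have s0: "(\<Sum>j\<in>N. w j * \<theta> j) = 0" unfolding s using p by (simp add: \<theta>_def)
  show ?thesis
  proof (intro exI[of _ "2*(w p)^2"] conjI exI[of _ \<theta>] allI impI ballI bexI[of _ p])
    show "0 < 2 * (w p)\<^sup>2" using nz p by simp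
    show "\<theta> p \<noteq> 0" using nz p by (simp add: \<theta>_def)
    show "p \<in> N" by fact
    show "\<theta> n = 0" if "n \<notin> N" for n using that p by (auto simp: \<theta>_def)
    show "2 * (w n)\<^sup>2 * \<theta> n - 4 * w n * (\<Sum>j\<in>N. w j * \<theta> j) = 2 * (w p)\<^sup>2 * \<theta> n" for n
      unfolding s0 using p by (auto simp: \<theta>_def)
  qed
next
  case False
  hence dist: "\<And>p q. p \<in> N \<Longrightarrow> q \<in> N \<Longrightarrow> p \<noteq> q \<Longrightarrow> (w p)^2 \<noteq> (w q)^2" by blast
  define a where "a n = 2*(w n)^2" for n
  have apos: "\<And>n. n \<in> N \<Longrightarrow> a n > 0" using nz by (simp add: a_def)
  have Ne: "N \<noteq> {}" using pq by auto
  obtain n1 where n1: "n1 \<in> N" "a n1 = Min (a ` N)"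
  proof -
    have "Min (a ` N) \<in> a ` N" using fin Ne by simp
    thus ?thesis using that by (metis imageE)
  qed
  define A where "A = a n1"
  have Ale: "\<And>n. n \<in> N \<Longrightarrow> A \<le> a n" unfolding A_def n1(2) using fin by simp
  define M where "M = N - {n1}"
  have Mfin: "finite M" using fin by (simp add: M_def)
  have Mne: "M \<noteq> {}" using pq by (auto simp: M_def)
  obtain n2 where n2: "n2 \<in> M" "a n2 = Min (a ` M)"
  proof -
    have "Min (a ` M) \<in> a ` M" using Mfin Mne by simp
    thus ?thesis using that by (metis imageE)
  qed
  define B where "B = a n2"
  have Ble: "\<And>n. n \<in> M \<Longrightarrow> B \<le> a n" unfolding B_def n2(2) using Mfin by simp
  have n2N: "n2 \<in> N" "n2 \<noteq> n1" using n2 by (auto simp: M_def)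
  have AB: "A < B"
  proof -
    have "A \<le> B" using Ale n2N unfolding B_def by simp
    moreover have "A \<noteq> B" using dist[OF n1(1) n2N(1) n2N(2)[symmetric]] unfolding A_def B_def a_def by simp
    ultimately show ?thesis by simp
  qed
  have A0: "A > 0" using apos[OF n1(1)] by (simp add: A_def)
  define T where "T = (\<Sum>n\<in>N. a n)"
  have TM: "(\<Sum>n\<in>M. a n) \<le> T" unfolding T_def M_def
    by (rule sum_mono2) (use fin apos in \<open>auto simp: less_imp_le\<close>)
  have T0: "T \<ge> 0" unfolding T_def by (rule sum_nonneg) (use apos in \<open>auto simp: less_imp_le\<close>)
  define f where "f \<mu> = (\<Sum>n\<in>N. 2 * a n / (a n - \<mu>))" for \<mu>
  define R where "R \<mu> = (\<Sum>n\<in>M. 2 * a n / (a n - \<mu>))" for \<mu>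
  have fR: "f \<mu> = 2 * A / (A - \<mu>) + R \<mu>" for \<mu>
    unfolding f_def R_def M_def A_def using fin n1(1) by (simp add: sum.remove)
  have Rlow: "R \<mu> \<ge> 2 * B / (B - \<mu>)" if "\<mu> < B" for \<mu>
  proof -
    have "2 * a n2 / (a n2 - \<mu>) \<le> R \<mu>" unfolding R_def
    proof (rule member_le_sum)
      fix x assume x: "x \<in> M - {n2}"
      hence "0 < a x" "B \<le> a x" using apos Ble by (auto simp: M_def)
      thus "0 \<le> 2 * a x / (a x - \<mu>)" using that by (intro divide_nonneg_pos) auto
    qed (use n2 Mfin in auto)
    thus ?thesis by (simp add: B_def)
  qed
  have Rup: "R \<mu> \<le> 2 * T / (B - \<mu>)" if "\<mu> < B" for \<mu>
  proof -
    have "R \<mu> \<le> (\<Sum>n\<in>M. 2 * a n / (B - \<mu>))" unfolding R_def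
    proof (rule sum_mono)
      fix n assume n: "n \<in> M"
      have "a n > 0" using n apos by (auto simp: M_def)
      moreover have "B - \<mu> \<le> a n - \<mu>" "B - \<mu> > 0" using Ble[OF n] that by auto
      ultimately show "2 * a n / (a n - \<mu>) \<le> 2 * a n / (B - \<mu>)"
        by (intro divide_left_mono) auto
    qed
    also have "\<dots> = 2 * (\<Sum>n\<in>M. a n) / (B - \<mu>)"
      by (simp add: sum_divide_distrib[symmetric] sum_distrib_left)
    also have "\<dots> \<le> 2 * T / (B - \<mu>)"
      using TM that by (intro divide_right_mono) auto
    finally show ?thesis .
  qed
  define d where "d = B - A"
  have d0: "d > 0" using AB by (simp add: d_def)
  define \<delta> where "\<delta> = A * d / (4*T + d + 2*A)"
  define \<epsilon> where "\<epsilon> = B * d / (2*d + 4*A)"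
  have \<delta>0: "\<delta> > 0" unfolding \<delta>_def using A0 d0 T0 by (intro divide_pos_pos) auto
  have \<delta>d: "\<delta> < d/2"
  proof -
    have den: "4*T + d + 2*A > 0" using A0 d0 T0 by simp
    have "A * d < d/2 * (4*T + d + 2*A)"
      using mult_pos_pos[OF d0 d0] mult_nonneg_nonneg[OF T0 less_imp_le[OF d0]]
      by (simp add: algebra_simps)
    thus ?thesis unfolding \<delta>_def using den by (simp add: pos_divide_less_eq)
  qed
  have \<epsilon>0: "\<epsilon> > 0" unfolding \<epsilon>_def using A0 d0 AB by (intro divide_pos_pos) auto
  have \<epsilon>d: "\<epsilon> \<le> d/2" unfolding \<epsilon>_def using A0 d0 by (simp add: field_simps d_def)
  define \<mu>0 where "\<mu>0 = A + \<delta>"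
  define \<mu>1 where "\<mu>1 = B - \<epsilon>"
  have f0: "f \<mu>0 \<le> 1"
  proof -
    have "B - \<mu>0 \<ge> d/2" using \<delta>d by (simp add: \<mu>0_def d_def)
    hence "2 * T / (B - \<mu>0) \<le> 2 * T / (d/2)" using T0 d0 by (intro divide_left_mono) auto
    hence r: "R \<mu>0 \<le> 4 * T / d" using Rup[of \<mu>0] \<delta>d d0 by (simp add: \<mu>0_def d_def)
    have "2 * A / (A - \<mu>0) = - 2 * (4*T + d + 2*A) / d"
      unfolding \<mu>0_def \<delta>_def using A0 d0 T0 by (simp add: field_simps)
    hence "f \<mu>0 \<le> - 2 * (4*T + d + 2*A) / d + 4 * T / d" using fR[of \<mu>0] r by simp
    also have "\<dots> = -2 - 4*A/d - 4*(T/d)" using d0 by (simp add: field_simps)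
    also have "\<dots> \<le> -2 - 4*A/d" using T0 d0 by simp
    also have "\<dots> \<le> 1" using A0 d0 by (smt (verit) divide_pos_pos)
    finally show ?thesis .
  qed
  have f1: "1 \<le> f \<mu>1"
  proof -
    have m1: "\<mu>1 - A \<ge> d/2" using \<epsilon>d by (simp add: \<mu>1_def d_def)
    have "2 * A / (\<mu>1 - A) \<le> 2 * A / (d/2)" using A0 d0 m1 by (intro divide_left_mono) auto
    moreover have "2 * A / (A - \<mu>1) = - (2 * A / (\<mu>1 - A))"
      by (metis minus_diff_eq minus_divide_right)
    ultimately have l1: "2 * A / (A - \<mu>1) \<ge> - (4 * A / d)" by simp
    have "R \<mu>1 \<ge> 2 * B / \<epsilon>" using Rlow[of \<mu>1] \<epsilon>0 by (simp add: \<mu>1_def)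
    also have "2 * B / \<epsilon> = 4 + 8 * A / d" unfolding \<epsilon>_def using AB A0 d0 by (simp add: field_simps)
    finally have "f \<mu>1 \<ge> - (4 * A / d) + 4 + 8 * A / d" using fR[of \<mu>1] l1 by simp
    moreover have "A / d > 0" using A0 d0 by simp
    ultimately show ?thesis by simp
  qed
  have ne: "a n - \<mu> \<noteq> 0" if "n \<in> N" "A < \<mu>" "\<mu> < B" for n \<mu>
  proof (cases "n = n1")
    case True thus ?thesis using that by (simp add: A_def)
  next
    case False hence "n \<in> M" using that by (simp add: M_def)
    thus ?thesis using Ble that by force
  qed
  have m01: "\<mu>0 \<le> \<mu>1" using \<delta>d \<epsilon>d by (simp add: \<mu>0_def \<mu>1_def d_def)
  have Am0: "A < \<mu>0" using \<delta>0 by (simp add: \<mu>0_def)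
  have m1B: "\<mu>1 < B" using \<epsilon>0 by (simp add: \<mu>1_def)
  have cont: "continuous_on {\<mu>0..\<mu>1} f"
    unfolding f_def
  proof (intro continuous_on_sum continuous_intros ballI)
    fix n x assume "n \<in> N" "x \<in> {\<mu>0..\<mu>1}"
    thus "a n - x \<noteq> 0" using ne[of n x] Am0 m1B by auto
  qed
  obtain \<mu> where \<mu>: "\<mu>0 \<le> \<mu>" "\<mu> \<le> \<mu>1" "f \<mu> = 1"
    using IVT'[of f \<mu>0 1 \<mu>1, OF f0 f1 m01 cont] by blast
  have Am: "A < \<mu>" "\<mu> < B" using \<mu> Am0 m1B by auto
  define \<theta> where "\<theta> n = (if n \<in> N then w n / (a n - \<mu>) else 0)" for n
  have sumv: "(\<Sum>j\<in>N. w j * \<theta> j) = 1/4"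
  proof -
    have "(\<Sum>j\<in>N. w j * \<theta> j) = (\<Sum>j\<in>N. (1/4) * (2 * a j / (a j - \<mu>)))"
      by (rule sum.cong) (auto simp: \<theta>_def a_def power2_eq_square)
    also have "\<dots> = (1/4) * f \<mu>" by (simp add: f_def sum_distrib_left)
    finally show ?thesis using \<mu> by simp
  qed
  show ?thesis
  proof (intro exI[of _ \<mu>] conjI exI[of _ \<theta>] allI impI ballI bexI[of _ p])
    show "0 < \<mu>" using Am A0 by simp
    show "\<theta> n = 0" if "n \<notin> N" for n using that by (simp add: \<theta>_def)
    show "\<theta> p \<noteq> 0" using nz[OF pq(1)] ne[OF pq(1) Am] by (simp add: \<theta>_def pq)
    show "p \<in> N" by fact
    show "2 * (w n)\<^sup>2 * \<theta> n - 4 * w n * (\<Sum>j\<in>N. w j * \<theta> j) = \<mu> * \<theta> n" if n: "n \<in> N" for n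
    proof -
      have z: "a n - \<mu> \<noteq> 0" using ne[OF n Am] .
      have "2 * (w n)\<^sup>2 * \<theta> n - 4 * w n * (\<Sum>j\<in>N. w j * \<theta> j) = a n * w n / (a n - \<mu>) - w n"
        unfolding sumv using n by (simp add: \<theta>_def a_def)
      also have "\<dots> = \<mu> * \<theta> n" using z n by (simp add: \<theta>_def field_simps)
      finally show ?thesis .
    qed
  qed
qed

lemma hinner_fin:
  assumes "equilibrium \<alpha> v" "real_rotation v w"
  shows "hinner w \<theta> = (\<Sum>n\<in>{n. v n \<noteq> 0}. w n * \<theta> n)"
  unfolding hinner_def
  by (rule inf_fin) (use eq_fin[OF assms(1)] rot_nz[OF assms(2)] in auto)

lemma lin_in:
  assumes "equilibrium \<alpha> v" "real_rotation v w" "v n \<noteq> 0"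
  shows "linop \<alpha> w \<theta> n = 2*(w n)^2*\<theta> n - 4*w n*hinner w \<theta>"
proof -
  have h: "(w n)^2 = (of_int n)^2 - \<alpha> + 2 * hnorm2 v"
    using rot_sq[OF assms(2)] eq_comp[OF assms(1,3)] by simp
  have "linop \<alpha> w \<theta> n = - ((of_int n)^2) * \<theta> n + \<alpha> * \<theta> n - 2 * \<theta> n * hnorm2 v
                        - 4 * w n * hinner w \<theta> + 3 * \<theta> n * (w n)^2"
    by (simp add: linop_def rot_hnorm[OF assms(2)])
  also have "\<dots> = 2*(w n)^2*\<theta> n - 4*w n*hinner w \<theta>"
    unfolding h by (simp add: algebra_simps)
  finally show ?thesis .
qed

lemma lin_out:
  assumes "real_rotation v w" "v n = 0"
  shows "linop \<alpha> w \<theta> n = (- ((of_int n)^2) + \<alpha> - 2 * hnorm2 v) * \<theta> n"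
proof -
  have "w n = 0" using rot_nz[OF assms(1), of n] assms(2) by simp
  thus ?thesis by (simp add: linop_def rot_hnorm[OF assms(1)] algebra_simps)
qed

lemma fin_lindom:
  assumes "finite F" "\<And>n. n \<notin> F \<Longrightarrow> \<theta> n = 0"
  shows "\<theta> \<in> lindom"
  unfolding lindom_def l2seq_def
  using summ_fin[OF assms(1), of "\<lambda>n. (norm (\<theta> n))^2"]
        summ_fin[OF assms(1), of "\<lambda>n. (norm ((of_int n)^2 * \<theta> n))^2"] assms(2)
  by auto

lemma eig_spec:
  assumes "lin_eigenvalue \<alpha> w \<mu>"
  shows "\<mu> \<in> lin_spectrum \<alpha> w"
proof -
  obtain \<theta> where th: "\<theta> \<in> lindom" "\<theta> \<noteq> (\<lambda>_. 0)" "linop \<alpha> w \<theta> = (\<lambda>n. \<mu> * \<theta> n)"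
    using assms unfolding lin_eigenvalue_def by blast
  obtain m where m: "\<theta> m \<noteq> 0" using th(2) by auto
  have sm: "(\<lambda>n. (norm (\<theta> n))^2) summable_on UNIV"
    using th(1) unfolding lindom_def l2seq_def by blast
  have "(norm (\<theta> m))^2 \<le> hnorm2 \<theta>" unfolding hnorm2_def using term_le[OF sm] by simp
  moreover have "(norm (\<theta> m))^2 > 0" using m by simp
  ultimately have pos: "hnorm2 \<theta> > 0" by linarith
  have z: "(\<lambda>n. linop \<alpha> w \<theta> n - \<mu> * \<theta> n) = (\<lambda>_. 0)" using th(3) by simp
  have "hnorm2 (\<lambda>_::int. 0::real) = 0" by (simp add: hnorm2_def)
  hence "\<not> (\<exists>C. \<forall>\<theta>\<in>lindom. hnorm2 \<theta> \<le> C * hnorm2 (\<lambda>n. linop \<alpha> w \<theta> n - \<mu> * \<theta> n))"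
    using th(1) pos z by force
  thus ?thesis unfolding lin_spectrum_def by blast
qed

lemma pos_eig:
  assumes eq: "equilibrium \<alpha> v" and rot: "real_rotation v w" and pq: "p \<noteq> q" "v p \<noteq> 0" "v q \<noteq> 0"
  shows "\<exists>\<mu>>0. lin_eigenvalue \<alpha> w \<mu>"
proof -
  define N where "N = {n. v n \<noteq> 0}"
  have fin: "finite N" using eq_fin[OF eq] by (simp add: N_def)
  have nz: "\<And>n. n \<in> N \<Longrightarrow> w n \<noteq> 0" using rot_nz[OF rot] by (simp add: N_def)
  obtain \<mu> \<theta> where mu: "\<mu> > 0" and th: "\<forall>n. n \<notin> N \<longrightarrow> \<theta> n = 0" "\<exists>n\<in>N. \<theta> n \<noteq> 0"
    "\<forall>n\<in>N. 2*(w n)^2 * \<theta> n - 4 * w n * (\<Sum>j\<in>N. w j * \<theta> j) = \<mu> * \<theta> n"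
  proof -
    have "p \<in> N" "q \<in> N" using pq by (auto simp: N_def)
    from secular[of N p q w, OF fin this pq(1) nz] show ?thesis using that by blast
  qed
  have "lin_eigenvalue \<alpha> w \<mu>"
    unfolding lin_eigenvalue_def
  proof (intro bexI conjI)
    show "\<theta> \<in> lindom" using fin_lindom[OF fin] th(1) by blast
    show "\<theta> \<noteq> (\<lambda>_. 0)" using th(2) by auto
    show "linop \<alpha> w \<theta> = (\<lambda>n. \<mu> * \<theta> n)"
    proof
      fix n show "linop \<alpha> w \<theta> n = \<mu> * \<theta> n"
      proof (cases "n \<in> N")
        case True
        thus ?thesis using lin_in[OF eq rot, of n \<theta>] th(3) hinner_fin[OF eq rot, of \<theta>]
          by (simp add: N_def)
      next
        case False
        thus ?thesis using lin_out[OF rot, of n \<alpha> \<theta>] th(1) by (simp add: N_def)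
      qed
    qed
  qed
  thus ?thesis using mu by blast
qed

lemma arith_aux: "(m::real) = - x + a - 2 * (a - y) \<Longrightarrow> 0 \<le> x \<Longrightarrow> y < a / 2 \<Longrightarrow> m < 0"
  by (simp add: field_simps)

lemma one_comp:
  assumes eq: "equilibrium \<alpha> v" and k: "v k \<noteq> 0" "\<forall>n. n \<noteq> k \<longrightarrow> v n = 0"
  shows "hnorm2 v = \<alpha> - (of_int k)^2" "{n. v n \<noteq> 0} = {k}"
proof -
  show N: "{n. v n \<noteq> 0} = {k}" using k by auto
  have "hnorm2 v = (\<Sum>n\<in>{k}. (norm (v n))^2)" unfolding hnorm2_def
    by (rule inf_fin) (use k in auto)
  hence "hnorm2 v = (cmod (v k))^2" by simp
  thus "hnorm2 v = \<alpha> - (of_int k)^2" using eq_comp[OF eq k(1)] by simp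
qed

theorem lemma5p2:
  fixes \<alpha> :: real
  assumes "\<alpha> > 0"
  shows "(\<forall>v. equilibrium \<alpha> v \<and> (\<exists>m k. m \<noteq> k \<and> v m \<noteq> 0 \<and> v k \<noteq> 0) \<longrightarrow> unstable_eq \<alpha> v)
       \<and> (\<forall>v. equilibrium \<alpha> v \<longrightarrow>
              (stable_eq \<alpha> v \<longleftrightarrow>
                 (\<exists>k::int. v k \<noteq> 0 \<and> (\<forall>n. n \<noteq> k \<longrightarrow> v n = 0) \<and> (of_int k)^2 < \<alpha> / 2)))"
proof (intro conjI allI impI)
  fix v assume h: "equilibrium \<alpha> v \<and> (\<exists>m k. m \<noteq> k \<and> v m \<noteq> 0 \<and> v k \<noteq> 0)"
  then obtain m k where mk: "m \<noteq> k" "v m \<noteq> 0" "v k \<noteq> 0" by blast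
  show "unstable_eq \<alpha> v" unfolding unstable_eq_def
  proof (intro allI impI)
    fix w assume rot: "real_rotation v w"
    obtain \<mu> where "\<mu> > 0" "lin_eigenvalue \<alpha> w \<mu>" using pos_eig[OF conjunct1[OF h] rot mk] by blast
    thus "real_unstable \<alpha> w" unfolding real_unstable_def using eig_spec by blast
  qed
next
  fix v assume eq: "equilibrium \<alpha> v"
  show "stable_eq \<alpha> v \<longleftrightarrow>
                 (\<exists>k::int. v k \<noteq> 0 \<and> (\<forall>n. n \<noteq> k \<longrightarrow> v n = 0) \<and> (of_int k)^2 < \<alpha> / 2)"
  proof
    assume "\<exists>k::int. v k \<noteq> 0 \<and> (\<forall>n. n \<noteq> k \<longrightarrow> v n = 0) \<and> (of_int k)^2 < \<alpha> / 2"
    then obtain k where k: "v k \<noteq> 0" "\<forall>n. n \<noteq> k \<longrightarrow> v n = 0" "(of_int k)^2 < \<alpha> / 2" by blast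
    note oc = one_comp[OF eq k(1,2)]
    show "stable_eq \<alpha> v" unfolding stable_eq_def real_stable_def
    proof (intro allI impI)
      fix w \<mu> assume rot: "real_rotation v w" and ev: "lin_eigenvalue \<alpha> w \<mu>"
      obtain \<theta> where th: "\<theta> \<noteq> (\<lambda>_. 0)" "linop \<alpha> w \<theta> = (\<lambda>n. \<mu> * \<theta> n)"
        using ev unfolding lin_eigenvalue_def by blast
      obtain n where n: "\<theta> n \<noteq> 0" using th(1) by auto
      have wk: "(w k)^2 = \<alpha> - (of_int k)^2"
        using rot_sq[OF rot, of k] eq_comp[OF eq k(1)] oc(1) by simp
      have hi: "hinner w \<theta> = w k * \<theta> k" using hinner_fin[OF eq rot, of \<theta>] oc(2) by simp
      have ln: "linop \<alpha> w \<theta> n = \<mu> * \<theta> n" using th(2) by simp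
      show "\<mu> < 0"
      proof (cases "n = k")
        case True
        have "linop \<alpha> w \<theta> n = (- 2 * (w k)^2) * \<theta> n"
          using lin_in[OF eq rot k(1), of \<theta>] hi True by (simp add: power2_eq_square algebra_simps)
        hence "\<mu> * \<theta> n = (- 2 * (w k)^2) * \<theta> n" using ln by simp
        hence "\<mu> = - 2 * (w k)^2" using n by (metis mult_cancel_right)
        moreover have "(w k)^2 > 0" using wk k(3) \<open>\<alpha> > 0\<close> by simp
        ultimately show ?thesis by simp
      next
        case False
        hence "linop \<alpha> w \<theta> n = (- ((of_int n)^2) + \<alpha> - 2 * hnorm2 v) * \<theta> n"
          using lin_out[OF rot, of n] k(2) by simp
        hence "\<mu> = - ((of_int n)^2) + \<alpha> - 2 * (\<alpha> - (of_int k)^2)" using ln n oc(1) by simp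
        moreover have "(of_int n :: real)^2 \<ge> 0" by simp
        ultimately show ?thesis using k(3) arith_aux by blast
      qed
    qed
  next
    assume st: "stable_eq \<alpha> v"
    define w where "w = (\<lambda>n. cmod (v n))"
    have rot: "real_rotation v w" unfolding w_def by (rule rot_exists)
    have rs: "\<And>\<mu>. lin_eigenvalue \<alpha> w \<mu> \<Longrightarrow> \<mu> < 0"
      using st rot unfolding stable_eq_def real_stable_def by blast
    define e where "e = (\<lambda>n::int. if n = 0 then 1 else (0::real))"
    have edom: "e \<in> lindom" by (rule fin_lindom[of "{0}"]) (auto simp: e_def)
    have enz: "e \<noteq> (\<lambda>_. 0)" by (auto simp: e_def fun_eq_iff)
    have not2: "\<not> (\<exists>p q. p \<noteq> q \<and> v p \<noteq> 0 \<and> v q \<noteq> 0)"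
    proof
      assume "\<exists>p q. p \<noteq> q \<and> v p \<noteq> 0 \<and> v q \<noteq> 0"
      then obtain p q where "p \<noteq> q" "v p \<noteq> 0" "v q \<noteq> 0" by blast
      from pos_eig[OF eq rot this] rs show False by force
    qed
    have ex: "\<exists>k. v k \<noteq> 0"
    proof (rule ccontr)
      assume "\<not> (\<exists>k. v k \<noteq> 0)"
      hence z: "\<And>n. v n = 0" by blast
      have S: "hnorm2 v = 0" unfolding hnorm2_def using z by simp
      have "linop \<alpha> w e = (\<lambda>n. \<alpha> * e n)"
      proof
        fix n show "linop \<alpha> w e n = \<alpha> * e n"
          using lin_out[OF rot z[of n], of \<alpha> e] S by (simp add: e_def)
      qed
      hence "lin_eigenvalue \<alpha> w \<alpha>" unfolding lin_eigenvalue_def using edom enz by blast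
      from rs[OF this] \<open>\<alpha> > 0\<close> show False by simp
    qed
    then obtain k where k: "v k \<noteq> 0" by blast
    have k2: "\<forall>n. n \<noteq> k \<longrightarrow> v n = 0" using not2 k by blast
    note oc = one_comp[OF eq k k2]
    have "(of_int k)^2 < \<alpha> / 2"
    proof (rule ccontr)
      assume "\<not> (of_int k)^2 < \<alpha> / 2"
      hence kb: "(of_int k)^2 \<ge> \<alpha> / 2" by simp
      hence k0: "k \<noteq> 0" using \<open>\<alpha> > 0\<close> by auto
      have hi: "hinner w e = w k * e k" using hinner_fin[OF eq rot, of e] oc(2) by simp
      have "linop \<alpha> w e = (\<lambda>n. (2 * (of_int k)^2 - \<alpha>) * e n)"
      proof
        fix n show "linop \<alpha> w e n = (2 * (of_int k)^2 - \<alpha>) * e n"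
        proof (cases "n = k")
          case True
          thus ?thesis using lin_in[OF eq rot k, of e] hi k0 by (simp add: e_def)
        next
          case False
          thus ?thesis using lin_out[OF rot, of n \<alpha> e] k2 oc(1) by (simp add: e_def)
        qed
      qed
      hence "lin_eigenvalue \<alpha> w (2 * (of_int k)^2 - \<alpha>)"
        unfolding lin_eigenvalue_def using edom enz by blast
      from rs[OF this] kb show False by simp
    qed
    thus "\<exists>k::int. v k \<noteq> 0 \<and> (\<forall>n. n \<noteq> k \<longrightarrow> v n = 0) \<and> (of_int k)^2 < \<alpha> / 2"
      using k k2 by blast
  qed
qed

end
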